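(* Let $T\in TP(d)$ be a biplanar extremal thermal process and let $(\lambda,\mu)$ be a pair of orderings for which the drawing of $G(T)$ is plain (orders $\pi_{in}(T)=\lambda$, $\pi_{out}(T)=\mu$). Let $p$ be a state of which $\lambda$ is a $\beta$-order. Then $r=Tp$ is an extreme point of $p^{TP}=\{Sp:S\in TP(d)\}$ and $\mu$ is a $\beta$-order of $r$. If moreover the ratios $p_i/g_i$ are pairwise distinct, then $T$ is the only element of $TP(d)$ mapping $p$ to $r$.
   Context: Fix $d\ge 2$, $\beta\in(0,\infty)$ and pairwise distinct reals $E_0=0,E_1,\dots,E_{d-1}$. Put $q_{m,n}=e^{-\beta(E_m-E_n)}$, $Z=\sum_j q_{j,0}$, $g_i=q_{i,0}/Z$. A state is a probability vector in $\mathbb{R}^d$. $TP(d)$ is the set of $d\times d$ real matrices with non-negative entries, columns summing to $1$, and $Tg=g$; an extremal thermal process is an extreme point of $TP(d)$. A $\beta$-order of a state $p$ is a tuple $(\pi(0),\dots,\pi(d-1))$ for a permutation $\pi$ of $\{0,\dots,d-1\}$ with $p_{\pi(0)}/g_{\pi(0)}\ge\dots\ge p_{\pi(d-1)}/g_{\pi(d-1)}$. For $T\in TP(d)$, $G(T)$ is the bipartite graph with left vertices $L_0,\dots,L_{d-1}$ (columns), right vertices $R_0,\dots,R_{d-1}$ (rows), and an edge $\{L_j,R_i\}$ iff $T_{ij}>0$. Given orderings $\lambda=(\lambda_0,\dots,\lambda_{d-1})$, $\mu=(\mu_0,\dots,\mu_{d-1})$ (permutations of $\{0,\dots,d-1\}$),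 place $L_{\lambda_a}$ at height $a$ on one vertical line and $R_{\mu_b}$ at height $b$ on a parallel line, edges drawn straight; the drawing is plain if there are no two edges $\{L_{\lambda_a},R_{\mu_b}\}$, $\{L_{\lambda_{a'}},R_{\mu_{b'}}\}$ with $a<a'$ and $b>b'$. An extremal thermal process is biplanar if some pair $(\lambda,\mu)$ gives a plain drawing. *)

theory Defs
  imports Main "HOL-Analysis.Analysis"
begin

text \<open>Vectors of R^d are functions nat => real, indices 0..d-1, value 0 outside.
  d x d matrices are functions nat => nat => real (row, column), entry 0 outside the block.\<close>

definition qq :: "real \<Rightarrow> (nat \<Rightarrow> real) \<Rightarrow> nat \<Rightarrow> nat \<Rightarrow> real" where
  "qq \<beta> E m n = exp (- \<beta> * (E m - E n))"

definition ZZ :: "nat \<Rightarrow> real \<Rightarrow> (nat \<Rightarrow> real) \<Rightarrow> real" where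
  "ZZ d \<beta> E = (\<Sum>j<d. qq \<beta> E j 0)"

definition gibbs :: "nat \<Rightarrow> real \<Rightarrow> (nat \<Rightarrow> real) \<Rightarrow> nat \<Rightarrow> real" where
  "gibbs d \<beta> E i = (if i < d then qq \<beta> E i 0 / ZZ d \<beta> E else 0)"

definition is_state :: "nat \<Rightarrow> (nat \<Rightarrow> real) \<Rightarrow> bool" where
  "is_state d p \<longleftrightarrow> (\<forall>i<d. 0 \<le> p i) \<and> (\<forall>i\<ge>d. p i = 0) \<and> (\<Sum>i<d. p i) = 1"

definition mat_app :: "nat \<Rightarrow> (nat \<Rightarrow> nat \<Rightarrow> real) \<Rightarrow> (nat \<Rightarrow> real) \<Rightarrow> nat \<Rightarrow> real" where
  "mat_app d T p i = (if i < d then (\<Sum>j<d. T i j * p j) else 0)"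

definition TP :: "nat \<Rightarrow> real \<Rightarrow> (nat \<Rightarrow> real) \<Rightarrow> (nat \<Rightarrow> nat \<Rightarrow> real) set" where
  "TP d \<beta> E = {T. (\<forall>i j. (i \<ge> d \<or> j \<ge> d) \<longrightarrow> T i j = 0)
                 \<and> (\<forall>i<d. \<forall>j<d. 0 \<le> T i j)
                 \<and> (\<forall>j<d. (\<Sum>i<d. T i j) = 1)
                 \<and> mat_app d T (gibbs d \<beta> E) = gibbs d \<beta> E}"

definition is_extreme_point :: "('a \<Rightarrow> real) \<Rightarrow> ('a \<Rightarrow> real) set \<Rightarrow> bool" where
  "is_extreme_point x S \<longleftrightarrow> x \<in> S \<and>
     (\<forall>a\<in>S. \<forall>b\<in>S. \<forall>t::real. 0 < t \<and> t < 1 \<and> a \<noteq> b \<longrightarrow> x \<noteq> (\<lambda>k. (1 - t) * a k + t * b k))"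

definition extremal_TP :: "nat \<Rightarrow> real \<Rightarrow> (nat \<Rightarrow> real) \<Rightarrow> (nat \<Rightarrow> nat \<Rightarrow> real) \<Rightarrow> bool" where
  "extremal_TP d \<beta> E T \<longleftrightarrow>
     is_extreme_point (\<lambda>(i, j). T i j) ((\<lambda>S (i, j). S i j) ` TP d \<beta> E)"

definition is_ordering :: "nat \<Rightarrow> (nat \<Rightarrow> nat) \<Rightarrow> bool" where
  "is_ordering d \<pi> \<longleftrightarrow> bij_betw \<pi> {..<d} {..<d}"

definition beta_order :: "nat \<Rightarrow> real \<Rightarrow> (nat \<Rightarrow> real) \<Rightarrow> (nat \<Rightarrow> real) \<Rightarrow> (nat \<Rightarrow> nat) \<Rightarrow> bool" where
  "beta_order d \<beta> E p \<pi> \<longleftrightarrow> is_ordering d \<pi> \<and>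
     (\<forall>a. a + 1 < d \<longrightarrow>
        p (\<pi> a) / gibbs d \<beta> E (\<pi> a) \<ge> p (\<pi> (a + 1)) / gibbs d \<beta> E (\<pi> (a + 1)))"

text \<open>Edge {L_j, R_i} of G(T) iff T_ij > 0.\<close>
definition G_edge :: "(nat \<Rightarrow> nat \<Rightarrow> real) \<Rightarrow> nat \<Rightarrow> nat \<Rightarrow> bool" where
  "G_edge T j i \<longleftrightarrow> T i j > 0"

definition plain_drawing :: "nat \<Rightarrow> (nat \<Rightarrow> nat \<Rightarrow> real) \<Rightarrow> (nat \<Rightarrow> nat) \<Rightarrow> (nat \<Rightarrow> nat) \<Rightarrow> bool" where
  "plain_drawing d T lam mu \<longleftrightarrow>
     \<not> (\<exists>a a' b b'. a < d \<and> a' < d \<and> b < d \<and> b' < d \<and> a < a' \<and> b > b' \<and>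
          G_edge T (lam a) (mu b) \<and> G_edge T (lam a') (mu b'))"

definition biplanar :: "nat \<Rightarrow> real \<Rightarrow> (nat \<Rightarrow> real) \<Rightarrow> (nat \<Rightarrow> nat \<Rightarrow> real) \<Rightarrow> bool" where
  "biplanar d \<beta> E T \<longleftrightarrow> extremal_TP d \<beta> E T \<and>
     (\<exists>lam mu. is_ordering d lam \<and> is_ordering d mu \<and> plain_drawing d T lam mu)"

definition TP_orbit :: "nat \<Rightarrow> real \<Rightarrow> (nat \<Rightarrow> real) \<Rightarrow> (nat \<Rightarrow> real) \<Rightarrow> (nat \<Rightarrow> real) set" where
  "TP_orbit d \<beta> E p = {mat_app d S p | S. S \<in> TP d \<beta> E}"

end

theory Submission
  imports Defs
begin

lemma knapsack:
  fixes J :: "nat set" and w ws g \<rho> :: "nat \<Rightarrow> real" and t :: real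
  assumes fin: "finite J" and gp: "\<And>j. j\<in>J \<Longrightarrow> g j > 0"
    and w01: "\<And>j. j\<in>J \<Longrightarrow> 0 \<le> w j \<and> w j \<le> 1"
    and up: "\<And>j. j\<in>J \<Longrightarrow> ws j > 0 \<Longrightarrow> \<rho> j \<ge> t"
    and dn: "\<And>j. j\<in>J \<Longrightarrow> ws j < 1 \<Longrightarrow> \<rho> j \<le> t"
    and eqg: "(\<Sum>j\<in>J. w j * g j) = (\<Sum>j\<in>J. ws j * g j)"
  shows "(\<Sum>j\<in>J. ws j * (g j * \<rho> j)) - (\<Sum>j\<in>J. w j * (g j * \<rho> j))
           = (\<Sum>j\<in>J. (ws j - w j) * g j * (\<rho> j - t))"
    and "\<And>j. j\<in>J \<Longrightarrow> (ws j - w j) * g j * (\<rho> j - t) \<ge> 0"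
proof -
  have "(\<Sum>j\<in>J. (ws j - w j) * g j * (\<rho> j - t))
      = (\<Sum>j\<in>J. (ws j * (g j * \<rho> j) - w j * (g j * \<rho> j)) - t * (ws j * g j - w j * g j))"
    by (rule sum.cong) (auto simp: algebra_simps)
  also have "\<dots> = ((\<Sum>j\<in>J. ws j * (g j * \<rho> j)) - (\<Sum>j\<in>J. w j * (g j * \<rho> j)))
        - t * ((\<Sum>j\<in>J. ws j * g j) - (\<Sum>j\<in>J. w j * g j))"
    by (simp add: sum_subtractf sum_distrib_left[symmetric])
  also have "\<dots> = (\<Sum>j\<in>J. ws j * (g j * \<rho> j)) - (\<Sum>j\<in>J. w j * (g j * \<rho> j))"
    using eqg by simp
  finally show "(\<Sum>j\<in>J. ws j * (g j * \<rho> j)) - (\<Sum>j\<in>J. w j * (g j * \<rho> j))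
           = (\<Sum>j\<in>J. (ws j - w j) * g j * (\<rho> j - t))" by simp
next
  fix j assume j: "j \<in> J"
  have "(ws j - w j) * (\<rho> j - t) \<ge> 0"
  proof (cases "ws j > w j")
    case True
    then have "ws j > 0" using w01[OF j] by linarith
    then have "\<rho> j \<ge> t" using up j by blast
    then show ?thesis using True by simp
  next
    case False
    show ?thesis
    proof (cases "ws j < w j")
      case True
      then have "ws j < 1" using w01[OF j] by linarith
      then have "\<rho> j \<le> t" using dn j by blast
      then show ?thesis using True by (intro mult_nonpos_nonpos) auto
    next
      case False
      then show ?thesis using \<open>\<not> ws j > w j\<close> by simp
    qed
  qed
  then have "g j * ((ws j - w j) * (\<rho> j - t)) \<ge> 0" using gp[OF j] by simp
  then show "(ws j - w j) * g j * (\<rho> j - t) \<ge> 0" by (simp add: mult_ac)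
qed

lemma threshold_exists:
  fixes J :: "nat set" and ws \<rho> :: "nat \<Rightarrow> real"
  assumes fin: "finite J"
    and pw: "\<And>j j'. j\<in>J \<Longrightarrow> j'\<in>J \<Longrightarrow> ws j > 0 \<Longrightarrow> ws j' < 1 \<Longrightarrow> \<rho> j' \<le> \<rho> j"
  shows "\<exists>t. \<forall>j\<in>J. (ws j > 0 \<longrightarrow> \<rho> j \<ge> t) \<and> (ws j < 1 \<longrightarrow> \<rho> j \<le> t)"
proof (cases "{j\<in>J. ws j > 0} = {}")
  case True
  have "\<forall>j\<in>J. \<rho> j \<le> (\<Sum>j\<in>J. \<bar>\<rho> j\<bar>)"
  proof
    fix j assume "j \<in> J"
    then have "\<bar>\<rho> j\<bar> \<le> (\<Sum>j\<in>J. \<bar>\<rho> j\<bar>)" using fin by (intro member_le_sum) auto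
    then show "\<rho> j \<le> (\<Sum>j\<in>J. \<bar>\<rho> j\<bar>)" by linarith
  qed
  then show ?thesis using True by blast
next
  case False
  let ?P = "{j\<in>J. ws j > 0}"
  define t where "t = Min (\<rho> ` ?P)"
  have fP: "finite (\<rho> ` ?P)" using fin by simp
  have nP: "\<rho> ` ?P \<noteq> {}" using False by simp
  show ?thesis
  proof (intro exI[of _ t] ballI conjI impI)
    fix j assume "j\<in>J" "ws j > 0" then show "\<rho> j \<ge> t" unfolding t_def using fP by (intro Min_le) auto
  next
    fix j assume "j\<in>J" "ws j < 1" then show "\<rho> j \<le> t" unfolding t_def using pw fP nP
      by (subst Min_ge_iff) auto
  qed
qed

lemma partial_sums_eq:
  fixes a r :: "nat \<Rightarrow> real"
  assumes bij: "bij_betw mu {..<d} {..<d}"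
    and ps: "\<And>k. k \<le> d \<Longrightarrow> (\<Sum>i<k. a (mu i)) = (\<Sum>i<k. r (mu i))"
    and a0: "\<And>i. i \<ge> d \<Longrightarrow> a i = 0" and r0: "\<And>i. i \<ge> d \<Longrightarrow> r i = 0"
  shows "a = r"
proof
  fix i show "a i = r i"
  proof (cases "i < d")
    case True
    then obtain k where k: "k < d" "mu k = i" using bij unfolding bij_betw_def by (metis imageE lessThan_iff)
    have "(\<Sum>i<Suc k. a (mu i)) = (\<Sum>i<Suc k. r (mu i))" using k by (intro ps) simp
    moreover have "(\<Sum>i<k. a (mu i)) = (\<Sum>i<k. r (mu i))" using k by (intro ps) simp
    ultimately show ?thesis using k by simp
  next
    case False then show ?thesis using a0 r0 by simp
  qed
qed

theorem mainTheorem9: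
  fixes d :: nat and \<beta> :: real and E :: "nat \<Rightarrow> real"
    and T :: "nat \<Rightarrow> nat \<Rightarrow> real" and lam mu :: "nat \<Rightarrow> nat" and p :: "nat \<Rightarrow> real"
  assumes "d \<ge> 2" and "\<beta> > 0" and "E 0 = 0" and "inj_on E {..<d}"
    and "T \<in> TP d \<beta> E" and "biplanar d \<beta> E T"
    and "is_ordering d lam" and "is_ordering d mu" and "plain_drawing d T lam mu"
    and "is_state d p" and "beta_order d \<beta> E p lam"
  shows "is_extreme_point (mat_app d T p) (TP_orbit d \<beta> E p)
    \<and> beta_order d \<beta> E (mat_app d T p) mu
    \<and> (inj_on (\<lambda>i. p i / gibbs d \<beta> E i) {..<d} \<longrightarrow>
         (\<forall>S \<in> TP d \<beta> E. mat_app d S p = mat_app d T p \<longrightarrow> S = T))"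
proof -
  define g where "g = gibbs d \<beta> E"
  define \<rho> where "\<rho> = (\<lambda>j. p j / g j)"
  note TPd = TP_def[of d \<beta> E, folded g_def]
  have TPD: "\<And>i j. S \<in> TP d \<beta> E \<Longrightarrow> i \<ge> d \<or> j \<ge> d \<Longrightarrow> S i j = 0"
    "\<And>i j. S \<in> TP d \<beta> E \<Longrightarrow> i < d \<Longrightarrow> j < d \<Longrightarrow> 0 \<le> S i j"
    "\<And>j. S \<in> TP d \<beta> E \<Longrightarrow> j < d \<Longrightarrow> (\<Sum>i<d. S i j) = 1"
    "S \<in> TP d \<beta> E \<Longrightarrow> mat_app d S g = g" for S
    unfolding TPd by auto
  have TinTP: "T \<in> TP d \<beta> E" by fact
  have dpos: "d > 0" using assms(1) by simp
  have Zpos: "ZZ d \<beta> E > 0" unfolding ZZ_def qq_def using dpos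
    by (intro sum_pos) auto
  have gpos: "\<And>j. j < d \<Longrightarrow> g j > 0"
    unfolding g_def gibbs_def qq_def using Zpos by auto
  have prho: "p j = g j * \<rho> j" if "j < d" for j
    unfolding \<rho>_def using gpos[OF that] by simp
  have lbij: "bij_betw lam {..<d} {..<d}" using assms(7) unfolding is_ordering_def .
  have mbij: "bij_betw mu {..<d} {..<d}" using assms(8) unfolding is_ordering_def .
  have mlt: "\<And>b. b < d \<Longrightarrow> mu b < d" using mbij unfolding bij_betw_def by auto
  have lsurj: "\<And>j. j < d \<Longrightarrow> \<exists>a<d. lam a = j"
    using lbij unfolding bij_betw_def by (metis imageE lessThan_iff)
  have bo: "\<And>a. a + 1 < d \<Longrightarrow> \<rho> (lam (Suc a)) \<le> \<rho> (lam a)"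
    using assms(11) unfolding beta_order_def \<rho>_def g_def by simp
  have lam_mono: "\<forall>a. a \<le> a' \<longrightarrow> a' < d \<longrightarrow> \<rho> (lam a') \<le> \<rho> (lam a)" for a'
  proof (induction a')
    case 0 then show ?case by simp
  next
    case (Suc n)
    show ?case
    proof (intro allI impI)
      fix a assume a: "a \<le> Suc n" "Suc n < d"
      show "\<rho> (lam (Suc n)) \<le> \<rho> (lam a)"
      proof (cases "a = Suc n")
        case True then show ?thesis by simp
      next
        case False
        then have "a \<le> n" using a by simp
        then have "\<rho> (lam n) \<le> \<rho> (lam a)" using Suc.IH a by simp
        moreover have "\<rho> (lam (Suc n)) \<le> \<rho> (lam n)" using bo[of n] a by simp
        ultimately show ?thesis by linarith
      qed
    qed
  qed
  have cross: "\<rho> j' \<le> \<rho> j"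
    if hyp: "j < d" "j' < d" "b < b'" "b' < d" "T (mu b) j > 0" "T (mu b') j' > 0" for j j' b b'
  proof -
    obtain a where a: "a < d" "lam a = j" using lsurj hyp(1) by blast
    obtain a' where a': "a' < d" "lam a' = j'" using lsurj hyp(2) by blast
    have "\<not> a' < a"
    proof
      assume "a' < a"
      then have "\<exists>a a' b b'. a < d \<and> a' < d \<and> b < d \<and> b' < d \<and> a < a' \<and> b > b' \<and>
          G_edge T (lam a) (mu b) \<and> G_edge T (lam a') (mu b')"
        using a a' hyp unfolding G_edge_def
        by (intro exI[of _ a'] exI[of _ a] exI[of _ b'] exI[of _ b]) auto
      then show False using assms(9) unfolding plain_drawing_def by blast
    qed
    then have "a \<le> a'" by simp
    then show ?thesis using lam_mono[of a'] a a' by blast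
  qed
  define W where "W S k j = (\<Sum>b<k. S (mu b) j)" for S :: "nat \<Rightarrow> nat \<Rightarrow> real" and k j
  have colsum: "(\<Sum>b<d. S (mu b) j) = 1" if "S \<in> TP d \<beta> E" "j < d" for S j
    using sum.reindex_bij_betw[OF mbij, of "\<lambda>i. S i j"] TPD(3)[OF that] by simp
  have W01: "0 \<le> W S k j \<and> W S k j \<le> 1" if "S \<in> TP d \<beta> E" "k \<le> d" "j < d" for S k j
  proof
    show "0 \<le> W S k j" unfolding W_def using that mlt TPD(2)[OF that(1)]
      by (intro sum_nonneg) auto
    have "W S k j \<le> (\<Sum>b<d. S (mu b) j)" unfolding W_def using that mlt TPD(2)[OF that(1)]
      by (intro sum_mono2) auto
    then show "W S k j \<le> 1" using colsum[OF that(1,3)] by simp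
  qed
  have Wsum: "(\<Sum>b<k. mat_app d S x (mu b)) = (\<Sum>j<d. W S k j * x j)" if "k \<le> d" for S k x
  proof -
    have "(\<Sum>b<k. mat_app d S x (mu b)) = (\<Sum>b<k. \<Sum>j<d. S (mu b) j * x j)"
      using that mlt by (intro sum.cong) (auto simp: mat_app_def)
    also have "\<dots> = (\<Sum>j<d. \<Sum>b<k. S (mu b) j * x j)" by (rule sum.swap)
    also have "\<dots> = (\<Sum>j<d. W S k j * x j)" unfolding W_def by (simp add: sum_distrib_right)
    finally show ?thesis .
  qed
  have Wg: "(\<Sum>j<d. W S k j * g j) = (\<Sum>b<k. g (mu b))" if "S \<in> TP d \<beta> E" "k \<le> d" for S k
    using Wsum[OF that(2), of S g] TPD(4)[OF that(1)] by simp
  have key: "(\<Sum>b<k. mat_app d S p (mu b)) \<le> (\<Sum>b<k. mat_app d T p (mu b))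
     \<and> (inj_on \<rho> {..<d} \<longrightarrow> (\<Sum>b<k. mat_app d S p (mu b)) = (\<Sum>b<k. mat_app d T p (mu b))
          \<longrightarrow> (\<forall>j<d. W S k j = W T k j))"
    if S: "S \<in> TP d \<beta> E" and k: "k \<le> d" for S k
  proof -
    have pw: "\<rho> j' \<le> \<rho> j" if "j \<in> {..<d}" "j' \<in> {..<d}" "W T k j > 0" "W T k j' < 1" for j j'
    proof -
      obtain b where b: "b < k" "T (mu b) j > 0"
      proof (rule ccontr)
        assume "\<not> thesis"
        then have "\<forall>b<k. T (mu b) j \<le> 0" using that by (meson not_le)
        then have "W T k j \<le> 0" unfolding W_def by (intro sum_nonpos) auto
        then show False using \<open>W T k j > 0\<close> by simp
      qed
      obtain b' where b': "k \<le> b'" "b' < d" "T (mu b') j' > 0"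
      proof (rule ccontr)
        assume "\<not> thesis"
        then have z: "\<forall>b'. k \<le> b' \<and> b' < d \<longrightarrow> T (mu b') j' = 0"
          using that TPD(2)[OF TinTP] mlt \<open>j' \<in> {..<d}\<close> by (meson lessThan_iff not_le order.antisym)
        have "(\<Sum>b<d. T (mu b) j') = (\<Sum>b<k. T (mu b) j')"
          using k z by (intro sum.mono_neutral_right) auto
        then have "W T k j' = 1" unfolding W_def using colsum[OF TinTP] \<open>j' \<in> {..<d}\<close> by simp
        then show False using \<open>W T k j' < 1\<close> by simp
      qed
      show ?thesis using cross[of j j' b b'] b b' that by simp
    qed
    obtain t where t: "\<forall>j\<in>{..<d}. (W T k j > 0 \<longrightarrow> \<rho> j \<ge> t) \<and> (W T k j < 1 \<longrightarrow> \<rho> j \<le> t)"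
      using threshold_exists[where J="{..<d}" and ws="W T k" and \<rho>=\<rho>] pw by blast
    have eqg: "(\<Sum>j<d. W S k j * g j) = (\<Sum>j<d. W T k j * g j)" using Wg[OF S k] Wg[OF TinTP k] by simp
    note kn = knapsack[where J="{..<d}" and w="W S k" and ws="W T k" and g=g and \<rho>=\<rho> and t=t, OF _ _ _ _ _ eqg]
    have kn1: "(\<Sum>j<d. W T k j * (g j * \<rho> j)) - (\<Sum>j<d. W S k j * (g j * \<rho> j))
           = (\<Sum>j<d. (W T k j - W S k j) * g j * (\<rho> j - t))"
      using kn(1) gpos W01[OF S k] t by auto
    have kn2: "\<And>j. j < d \<Longrightarrow> (W T k j - W S k j) * g j * (\<rho> j - t) \<ge> 0"
      using kn(2) gpos W01[OF S k] t by auto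
    have sp: "(\<Sum>j<d. W U k j * (g j * \<rho> j)) = (\<Sum>b<k. mat_app d U p (mu b))" for U
      using Wsum[OF k, of U p] prho by (auto intro!: sum.cong)
    have diff: "(\<Sum>b<k. mat_app d T p (mu b)) - (\<Sum>b<k. mat_app d S p (mu b))
       = (\<Sum>j<d. (W T k j - W S k j) * g j * (\<rho> j - t))" using kn1 sp by simp
    have nn: "(\<Sum>j<d. (W T k j - W S k j) * g j * (\<rho> j - t)) \<ge> 0"
      using kn2 by (intro sum_nonneg) auto
    show ?thesis
    proof (intro conjI impI allI)
      show "(\<Sum>b<k. mat_app d S p (mu b)) \<le> (\<Sum>b<k. mat_app d T p (mu b))" using diff nn by linarith
    next
      fix j assume inj: "inj_on \<rho> {..<d}"
        and eq: "(\<Sum>b<k. mat_app d S p (mu b)) = (\<Sum>b<k. mat_app d T p (mu b))" and j: "j < d"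
      have "(\<Sum>j<d. (W T k j - W S k j) * g j * (\<rho> j - t)) = 0" using diff eq by simp
      then have z: "\<forall>j\<in>{..<d}. (W T k j - W S k j) * g j * (\<rho> j - t) = 0"
        using kn2 by (subst sum_nonneg_eq_0_iff[symmetric]) auto
      have ne: "W S k j' = W T k j'" if "j' < d" "\<rho> j' \<noteq> t" for j'
      proof -
        have "(W T k j' - W S k j') * g j' * (\<rho> j' - t) = 0" using z that(1) by blast
        then show ?thesis using that gpos[OF that(1)] by simp
      qed
      show "W S k j = W T k j"
      proof (cases "\<rho> j = t")
        case False then show ?thesis using ne j by simp
      next
        case True
        have oth: "(W T k j' - W S k j') * g j' = 0" if "j' \<in> {..<d} - {j}" for j'
        proof -
          have "\<rho> j' \<noteq> \<rho> j" using inj that j unfolding inj_on_def by auto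
          then show ?thesis using ne[of j'] that True by simp
        qed
        have "(\<Sum>j<d. (W T k j - W S k j) * g j) = 0"
          using eqg by (simp add: sum_subtractf left_diff_distrib)
        moreover have "(\<Sum>j<d. (W T k j - W S k j) * g j)
           = (W T k j - W S k j) * g j + (\<Sum>j'\<in>{..<d} - {j}. (W T k j' - W S k j') * g j')"
          using j by (intro sum.remove) auto
        moreover have "(\<Sum>j'\<in>{..<d} - {j}. (W T k j' - W S k j') * g j') = 0"
          using oth by (intro sum.neutral) auto
        ultimately have "(W T k j - W S k j) * g j = 0" by simp
        then show ?thesis using gpos[OF j] by simp
      qed
    qed
  qed
  let ?r = "mat_app d T p"
  have r0: "\<And>i. i \<ge> d \<Longrightarrow> mat_app d S x i = 0" for S x by (simp add: mat_app_def)
  have P1: "is_extreme_point ?r (TP_orbit d \<beta> E p)"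
    unfolding is_extreme_point_def
  proof (intro conjI ballI allI impI)
    show "?r \<in> TP_orbit d \<beta> E p" unfolding TP_orbit_def using TinTP by blast
  next
    fix a b and t :: real
    assume a: "a \<in> TP_orbit d \<beta> E p" and b: "b \<in> TP_orbit d \<beta> E p"
      and tt: "0 < t \<and> t < 1 \<and> a \<noteq> b"
    show "?r \<noteq> (\<lambda>k. (1 - t) * a k + t * b k)"
    proof
      assume hr: "?r = (\<lambda>k. (1 - t) * a k + t * b k)"
      obtain Sa where Sa: "Sa \<in> TP d \<beta> E" "a = mat_app d Sa p" using a unfolding TP_orbit_def by blast
      obtain Sb where Sb: "Sb \<in> TP d \<beta> E" "b = mat_app d Sb p" using b unfolding TP_orbit_def by blast
      have eqs: "(\<Sum>i<k. a (mu i)) = (\<Sum>i<k. ?r (mu i)) \<and> (\<Sum>i<k. b (mu i)) = (\<Sum>i<k. ?r (mu i))"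
        if k: "k \<le> d" for k
      proof -
        define A where "A = (\<Sum>i<k. a (mu i))"
        define B where "B = (\<Sum>i<k. b (mu i))"
        define R where "R = (\<Sum>i<k. ?r (mu i))"
        have f1: "A \<le> R" unfolding A_def R_def using key[OF Sa(1) k] Sa(2) by simp
        have f2: "B \<le> R" unfolding B_def R_def using key[OF Sb(1) k] Sb(2) by simp
        have f3: "R = (1 - t) * A + t * B" unfolding R_def A_def B_def
          by (subst hr) (simp add: sum.distrib sum_distrib_left)
        have h1: "(1 - t) * (R - A) + t * (R - B) = 0" using f3 by (simp add: algebra_simps)
        have h2: "(1 - t) * (R - A) \<ge> 0" using f1 tt by simp
        have h3: "t * (R - B) \<ge> 0" using f2 tt by simp
        from h1 h2 h3 have "(1 - t) * (R - A) = 0" "t * (R - B) = 0" by linarith+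
        then have "R = A" "R = B" using tt by auto
        then show ?thesis unfolding A_def B_def R_def by simp
      qed
      have "a = ?r" using eqs Sa(2) by (intro partial_sums_eq[OF mbij]) (auto simp: mat_app_def)
      moreover have "b = ?r" using eqs Sb(2) by (intro partial_sums_eq[OF mbij]) (auto simp: mat_app_def)
      ultimately show False using tt by simp
    qed
  qed
  have P2: "beta_order d \<beta> E ?r mu"
    unfolding beta_order_def
  proof (intro conjI allI impI)
    show "is_ordering d mu" by fact
  next
    fix a assume a: "a + 1 < d"
    define i where "i = mu a"
    define i' where "i' = mu (a + 1)"
    have i: "i < d" "i' < d" unfolding i_def i'_def using mlt a by auto
    have gi: "g k = (\<Sum>j<d. T k j * g j)" if "k < d" for k
    proof -
      have "mat_app d T g k = g k" using TPD(4)[OF TinTP] by simp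
      then show ?thesis using that unfolding mat_app_def by simp
    qed
    have ri: "?r k = (\<Sum>j<d. T k j * p j)" if "k < d" for k using that by (simp add: mat_app_def)
    have trm: "(T i j * g j) * (T i' j' * p j') \<le> (T i j * p j) * (T i' j' * g j')"
      if j: "j < d" "j' < d" for j j'
    proof (cases "T i j > 0 \<and> T i' j' > 0")
      case True
      then have "\<rho> j' \<le> \<rho> j" using cross[of j j' a "a+1"] j a unfolding i_def i'_def by simp
      then have "(T i j * T i' j' * g j * g j') * \<rho> j' \<le> (T i j * T i' j' * g j * g j') * \<rho> j"
        using True gpos[OF j(1)] gpos[OF j(2)] by (intro mult_left_mono) auto
      then show ?thesis using prho j by (simp add: mult_ac)
    next
      case False
      have "0 \<le> T i j" "0 \<le> T i' j'" using TPD(2)[OF TinTP] i j by auto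
      then have "T i j = 0 \<or> T i' j' = 0" using False by linarith
      then show ?thesis by auto
    qed
    have "g i * ?r i' = (\<Sum>j<d. \<Sum>j'<d. (T i j * g j) * (T i' j' * p j'))"
      using gi[OF i(1)] ri[OF i(2)] by (simp add: sum_product)
    also have "\<dots> \<le> (\<Sum>j<d. \<Sum>j'<d. (T i j * p j) * (T i' j' * g j'))"
      using trm by (intro sum_mono) auto
    also have "\<dots> = ?r i * g i'"
      using ri[OF i(1)] gi[OF i(2)] by (simp add: sum_product)
    finally have "g i * ?r i' \<le> ?r i * g i'" .
    then have "?r i' / g i' \<le> ?r i / g i" using gpos[OF i(1)] gpos[OF i(2)]
      by (simp add: divide_simps mult.commute)
    then show "?r (mu (a + 1)) / gibbs d \<beta> E (mu (a + 1)) \<le> ?r (mu a) / gibbs d \<beta> E (mu a)"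
      unfolding i_def i'_def g_def .
  qed
  have P3: "\<forall>S \<in> TP d \<beta> E. mat_app d S p = ?r \<longrightarrow> S = T"
    if inj: "inj_on (\<lambda>i. p i / gibbs d \<beta> E i) {..<d}"
  proof (intro ballI impI)
    fix S assume S: "S \<in> TP d \<beta> E" and Sr: "mat_app d S p = ?r"
    have injr: "inj_on \<rho> {..<d}" using inj unfolding \<rho>_def g_def .
    have WW: "W S k j = W T k j" if "k \<le> d" "j < d" for k j
      using key[OF S that(1)] injr Sr that(2) by simp
    show "S = T"
    proof (intro ext)
      fix i j show "S i j = T i j"
      proof (cases "j < d")
        case True
        have "(\<lambda>i. S i j) = (\<lambda>i. T i j)"
          using WW[OF _ True] TPD(1)[OF S] TPD(1)[OF TinTP] unfolding W_def
          by (intro partial_sums_eq[OF mbij]) auto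
        then show ?thesis by metis
      next
        case False then show ?thesis using TPD(1)[OF S] TPD(1)[OF TinTP] by simp
      qed
    qed
  qed
  show ?thesis using P1 P2 P3 by blast
qed

end
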